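(* Let $G$ and $H$ be finite simple graphs without isolated vertices. Let $g=(A_0,A_1,A_2)$ be a $\gamma_{tR}(G)$-function with $|A_2|$ maximum among all $\gamma_{tR}(G)$-functions, and let $h=(B_0,B_1,B_2)$ be a $\gamma_{tR}(H)$-function with $|B_2|$ maximum among all $\gamma_{tR}(H)$-functions. Then $$\max\{\rho(H)\gamma_{tR}(G),\rho(G)\gamma_{tR}(H)\}\le \gamma_{tR}(G\times H)\le \gamma_{tR}(H)\gamma_{tR}(G)-2|A_2||B_2|.$$
   Context: For a graph $G$ without isolated vertices, a total Roman dominating function is a map $f:V(G)\to\{0,1,2\}$, written $f=(V_0,V_1,V_2)$ with $V_i=\{v: f(v)=i\}$, such that every vertex in $V_0$ has a neighbor in $V_2$ and the subgraph induced by $V_1\cup V_2$ has no isolated vertices. Its weight is $\omega(f)=\sum_v f(v)$. The total Roman domination number $\gamma_{tR}(G)$ is the minimum weight of a total Roman dominating function; a $\gamma_{tR}(G)$-function is one attaining it. A packing of $G$ is a set $D$ of vertices with $N[u]\cap N[v]=\emptyset$ for all distinct $u,v\in D$ (closed neighborhoods); $\rho(G)$ is the maximum size of a packing. The direct product $G\times H$ has vertex set $V(G)\times V(H)$, with $(g,h)(g',h')$ an edge iff $gg'\in E(G)$ and $hh'\in E(H)$. *)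

theory Defs
  imports Main
begin

definition simple_graph :: "'a set \<Rightarrow> ('a \<Rightarrow> 'a \<Rightarrow> bool) \<Rightarrow> bool" where
  "simple_graph V E \<longleftrightarrow> finite V \<and> (\<forall>u v. E u v \<longrightarrow> u \<in> V \<and> v \<in> V)
     \<and> (\<forall>u v. E u v \<longrightarrow> E v u) \<and> (\<forall>v. \<not> E v v)"

definition no_isolated :: "'a set \<Rightarrow> ('a \<Rightarrow> 'a \<Rightarrow> bool) \<Rightarrow> bool" where
  "no_isolated V E \<longleftrightarrow> (\<forall>v\<in>V. \<exists>u. E v u)"

definition is_trdf :: "'a set \<Rightarrow> ('a \<Rightarrow> 'a \<Rightarrow> bool) \<Rightarrow> ('a \<Rightarrow> nat) \<Rightarrow> bool" where
  "is_trdf V E f \<longleftrightarrow> (\<forall>v\<in>V. f v \<le> 2)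
     \<and> (\<forall>v\<in>V. f v = 0 \<longrightarrow> (\<exists>u. E v u \<and> f u = 2))
     \<and> (\<forall>v\<in>V. f v \<noteq> 0 \<longrightarrow> (\<exists>u. E v u \<and> f u \<noteq> 0))"

definition weight :: "'a set \<Rightarrow> ('a \<Rightarrow> nat) \<Rightarrow> nat" where
  "weight V f = (\<Sum>v\<in>V. f v)"

definition gamma_tR :: "'a set \<Rightarrow> ('a \<Rightarrow> 'a \<Rightarrow> bool) \<Rightarrow> nat" where
  "gamma_tR V E = Min (weight V ` {f. is_trdf V E f})"

definition is_gamma_tR_function :: "'a set \<Rightarrow> ('a \<Rightarrow> 'a \<Rightarrow> bool) \<Rightarrow> ('a \<Rightarrow> nat) \<Rightarrow> bool" where
  "is_gamma_tR_function V E f \<longleftrightarrow> is_trdf V E f \<and> weight V f = gamma_tR V E"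

definition level :: "'a set \<Rightarrow> ('a \<Rightarrow> nat) \<Rightarrow> nat \<Rightarrow> 'a set" where
  "level V f i = {v\<in>V. f v = i}"

definition cnbhd :: "('a \<Rightarrow> 'a \<Rightarrow> bool) \<Rightarrow> 'a \<Rightarrow> 'a set" where
  "cnbhd E v = insert v {u. E v u}"

definition is_packing :: "'a set \<Rightarrow> ('a \<Rightarrow> 'a \<Rightarrow> bool) \<Rightarrow> 'a set \<Rightarrow> bool" where
  "is_packing V E D \<longleftrightarrow> D \<subseteq> V \<and>
     (\<forall>u\<in>D. \<forall>v\<in>D. u \<noteq> v \<longrightarrow> cnbhd E u \<inter> cnbhd E v = {})"

definition rho :: "'a set \<Rightarrow> ('a \<Rightarrow> 'a \<Rightarrow> bool) \<Rightarrow> nat" where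
  "rho V E = Max (card ` {D. is_packing V E D})"

definition direct_prod_edge ::
  "('a \<Rightarrow> 'a \<Rightarrow> bool) \<Rightarrow> ('b \<Rightarrow> 'b \<Rightarrow> bool) \<Rightarrow> ('a \<times> 'b) \<Rightarrow> ('a \<times> 'b) \<Rightarrow> bool" where
  "direct_prod_edge EG EH x y \<longleftrightarrow> EG (fst x) (fst y) \<and> EH (snd x) (snd y)"

end

theory Submission
  imports Defs
begin

lemma trdf_bound:
  assumes "is_trdf V E f" "finite V"
  shows "weight V f \<le> 2 * card V"
proof -
  have "weight V f \<le> (\<Sum>v\<in>V. 2)" unfolding weight_def
    using assms(1) by (intro sum_mono) (auto simp: is_trdf_def)
  then show ?thesis by simp
qed

lemma gamma_le:
  assumes "simple_graph V E" "is_trdf V E f"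
  shows "gamma_tR V E \<le> weight V f"
proof -
  have fin: "finite V" using assms(1) by (simp add: simple_graph_def)
  have "weight V ` {f. is_trdf V E f} \<subseteq> {..2 * card V}"
    using trdf_bound[OF _ fin] by auto
  then have "finite (weight V ` {f. is_trdf V E f})" by (rule finite_subset) simp
  then show ?thesis unfolding gamma_tR_def using assms(2) by (intro Min_le) auto
qed

lemma gamma_ex:
  assumes "simple_graph V E" "no_isolated V E"
  shows "\<exists>f. is_trdf V E f \<and> weight V f = gamma_tR V E"
proof -
  have fin: "finite V" using assms(1) by (simp add: simple_graph_def)
  have "weight V ` {f. is_trdf V E f} \<subseteq> {..2 * card V}"
    using trdf_bound[OF _ fin] by auto
  then have F: "finite (weight V ` {f. is_trdf V E f})" by (rule finite_subset) simp
  have "is_trdf V E (\<lambda>_. 1)" using assms(2) by (auto simp: is_trdf_def no_isolated_def)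
  then have "weight V ` {f. is_trdf V E f} \<noteq> {}" by auto
  from Min_in[OF F this] show ?thesis unfolding gamma_tR_def by auto
qed

lemma prod_simple:
  assumes "simple_graph VG EG" "simple_graph VH EH"
  shows "simple_graph (VG \<times> VH) (direct_prod_edge EG EH)"
  using assms unfolding simple_graph_def direct_prod_edge_def by auto

lemma prod_noiso:
  assumes "no_isolated VG EG" "no_isolated VH EH"
  shows "no_isolated (VG \<times> VH) (direct_prod_edge EG EH)"
  using assms unfolding no_isolated_def direct_prod_edge_def by fastforce

lemma rho_ex:
  assumes "simple_graph V E"
  shows "\<exists>D. is_packing V E D \<and> card D = rho V E"
proof -
  have fin: "finite V" using assms(1) by (simp add: simple_graph_def)
  have "{D. is_packing V E D} \<subseteq> Pow V" by (auto simp: is_packing_def)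
  then have "finite {D. is_packing V E D}" using fin by (meson finite_Pow_iff finite_subset)
  then have F: "finite (card ` {D. is_packing V E D})" by simp
  have "is_packing V E {}" by (simp add: is_packing_def)
  then have "card ` {D. is_packing V E D} \<noteq> {}" by auto
  from Max_in[OF F this] show ?thesis unfolding rho_def by auto
qed

lemma lower:
  assumes SG: "simple_graph VG EG" and SH: "simple_graph VH EH"
    and f: "is_trdf (VG \<times> VH) (direct_prod_edge EG EH) f"
    and D: "is_packing VH EH D"
  shows "card D * gamma_tR VG EG \<le> weight (VG \<times> VH) f"
proof -
  have finG: "finite VG" using SG by (simp add: simple_graph_def)
  have finH: "finite VH" using SH by (simp add: simple_graph_def)
  have DV: "D \<subseteq> VH" using D by (simp add: is_packing_def)
  have NV: "cnbhd EH v \<subseteq> VH" if "v \<in> VH" for v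
    using that SH by (auto simp: cnbhd_def simple_graph_def)
  have finN: "finite (cnbhd EH v)" if "v \<in> VH" for v using NV[OF that] finH finite_subset by blast
  have step: "gamma_tR VG EG \<le> (\<Sum>x\<in>VG \<times> cnbhd EH v. f x)" if v: "v \<in> VH" for v
  proof -
    define gv where "gv = (\<lambda>u. min 2 (\<Sum>w\<in>cnbhd EH v. f (u, w)))"
    have nb: "\<exists>u' w. EG u u' \<and> EH v w \<and> f (u', w) \<noteq> 0 \<and> (f (u, v) = 0 \<longrightarrow> f (u', w) = 2)"
      if u: "u \<in> VG" for u
    proof (cases "f (u, v) = 0")
      case True
      then obtain y where "direct_prod_edge EG EH (u, v) y" "f y = 2"
        using f u v unfolding is_trdf_def by fastforce
      then have "EG u (fst y)" "EH v (snd y)" by (auto simp: direct_prod_edge_def)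
      then show ?thesis using True \<open>f y = 2\<close> by (intro exI[of _ "fst y"] exI[of _ "snd y"]) simp
    next
      case False
      then obtain y where "direct_prod_edge EG EH (u, v) y" "f y \<noteq> 0"
        using f u v unfolding is_trdf_def by fastforce
      then have "EG u (fst y)" "EH v (snd y)" by (auto simp: direct_prod_edge_def)
      then show ?thesis using False \<open>f y \<noteq> 0\<close> by (intro exI[of _ "fst y"] exI[of _ "snd y"]) simp
    qed
    have ge: "gv u' \<ge> min 2 (f (u', w))" if "EH v w" for u' w
    proof -
      have "w \<in> cnbhd EH v" using that by (simp add: cnbhd_def)
      then have "f (u', w) \<le> (\<Sum>w\<in>cnbhd EH v. f (u', w))"
        using finN[OF v] by (intro member_le_sum) auto
      then show ?thesis unfolding gv_def by simp
    qed
    have tr: "is_trdf VG EG gv"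
      unfolding is_trdf_def
    proof (intro conjI ballI impI)
      fix u assume "u \<in> VG" then show "gv u \<le> 2" by (simp add: gv_def)
    next
      fix u assume u: "u \<in> VG" and z: "gv u = 0"
      have "v \<in> cnbhd EH v" by (simp add: cnbhd_def)
      then have "f (u, v) \<le> (\<Sum>w\<in>cnbhd EH v. f (u, w))"
        using finN[OF v] by (intro member_le_sum) auto
      with z have "f (u, v) = 0" by (simp add: gv_def)
      with nb[OF u] obtain u' w where "EG u u'" "EH v w" "f (u', w) = 2" by blast
      moreover have "gv u' \<le> 2" by (simp add: gv_def)
      ultimately show "\<exists>u'. EG u u' \<and> gv u' = 2" using ge[where u'=u' and w=w] by force
    next
      fix u assume u: "u \<in> VG" and z: "gv u \<noteq> 0"
      from nb[OF u] obtain u' w where "EG u u'" "EH v w" "f (u', w) \<noteq> 0" by blast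
      then show "\<exists>u'. EG u u' \<and> gv u' \<noteq> 0" using ge[where u'=u' and w=w] by force
    qed
    have "gamma_tR VG EG \<le> weight VG gv" by (rule gamma_le[OF SG tr])
    also have "\<dots> \<le> (\<Sum>u\<in>VG. \<Sum>w\<in>cnbhd EH v. f (u, w))"
      unfolding weight_def gv_def by (intro sum_mono) simp
    also have "\<dots> = (\<Sum>x\<in>VG \<times> cnbhd EH v. f x)"
      by (simp add: sum.cartesian_product)
    finally show ?thesis .
  qed
  have "card D * gamma_tR VG EG = (\<Sum>v\<in>D. gamma_tR VG EG)" by simp
  also have "\<dots> \<le> (\<Sum>v\<in>D. \<Sum>x\<in>VG \<times> cnbhd EH v. f x)"
    using DV step by (intro sum_mono) auto
  also have "\<dots> = (\<Sum>x\<in>(\<Union>v\<in>D. VG \<times> cnbhd EH v). f x)"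
  proof (rule sum.UNION_disjoint[symmetric])
    show "finite D" using DV finH finite_subset by blast
    show "\<forall>i\<in>D. finite (VG \<times> cnbhd EH i)" using DV finG finN by blast
    show "\<forall>i\<in>D. \<forall>j\<in>D. i \<noteq> j \<longrightarrow> VG \<times> cnbhd EH i \<inter> VG \<times> cnbhd EH j = {}"
      using D unfolding is_packing_def by blast
  qed
  also have "\<dots> \<le> (\<Sum>x\<in>VG \<times> VH. f x)"
    using DV NV finG finH by (intro sum_mono2) auto
  finally show ?thesis by (simp add: weight_def)
qed

lemma swap_trdf:
  assumes "is_trdf (VG \<times> VH) (direct_prod_edge EG EH) f"
  shows "is_trdf (VH \<times> VG) (direct_prod_edge EH EG) (f \<circ> prod.swap)"
    and "weight (VH \<times> VG) (f \<circ> prod.swap) = weight (VG \<times> VH) f"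
proof -
  show "is_trdf (VH \<times> VG) (direct_prod_edge EH EG) (f \<circ> prod.swap)"
    unfolding is_trdf_def
  proof (intro conjI ballI impI)
    fix x :: "'b \<times> 'a" assume x: "x \<in> VH \<times> VG"
    then have sx: "prod.swap x \<in> VG \<times> VH" by auto
    have T1: "\<forall>v\<in>VG \<times> VH. f v \<le> 2"
      and T2: "\<forall>v\<in>VG \<times> VH. f v = 0 \<longrightarrow> (\<exists>u. direct_prod_edge EG EH v u \<and> f u = 2)"
      and T3: "\<forall>v\<in>VG \<times> VH. f v \<noteq> 0 \<longrightarrow> (\<exists>u. direct_prod_edge EG EH v u \<and> f u \<noteq> 0)"
      using assms unfolding is_trdf_def by blast+
    show "(f \<circ> prod.swap) x \<le> 2" using T1 sx by (metis comp_apply)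
    {
      assume "(f \<circ> prod.swap) x = 0"
      then have "f (prod.swap x) = 0" by simp
      then obtain y where "direct_prod_edge EG EH (prod.swap x) y" "f y = 2"
        using mp[OF bspec[OF T2 sx]] by blast
      then show "\<exists>y. direct_prod_edge EH EG x y \<and> (f \<circ> prod.swap) y = 2"
        by (intro exI[of _ "prod.swap y"]) (auto simp: direct_prod_edge_def)
    }
    {
      assume "(f \<circ> prod.swap) x \<noteq> 0"
      then have "f (prod.swap x) \<noteq> 0" by simp
      then obtain y where "direct_prod_edge EG EH (prod.swap x) y" "f y \<noteq> 0"
        using mp[OF bspec[OF T3 sx]] by blast
      then show "\<exists>y. direct_prod_edge EH EG x y \<and> (f \<circ> prod.swap) y \<noteq> 0"
        by (intro exI[of _ "prod.swap y"]) (auto simp: direct_prod_edge_def)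
    }
  qed
  show "weight (VH \<times> VG) (f \<circ> prod.swap) = weight (VG \<times> VH) f"
    unfolding weight_def
  proof -
    have "inj_on prod.swap (VH \<times> VG)" by (simp add: inj_on_def)
    from sum.reindex[OF this, of f] show "sum (f \<circ> prod.swap) (VH \<times> VG) = sum f (VG \<times> VH)"
      by (simp add: product_swap)
  qed
qed

theorem theorem2p1:
  fixes VG :: "'a set" and EG :: "'a \<Rightarrow> 'a \<Rightarrow> bool"
    and VH :: "'b set" and EH :: "'b \<Rightarrow> 'b \<Rightarrow> bool"
    and g :: "'a \<Rightarrow> nat" and h :: "'b \<Rightarrow> nat"
  assumes G: "simple_graph VG EG" "no_isolated VG EG"
    and H: "simple_graph VH EH" "no_isolated VH EH"
    and g: "is_gamma_tR_function VG EG g"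
    and gmax: "\<forall>g'. is_gamma_tR_function VG EG g' \<longrightarrow> card (level VG g' 2) \<le> card (level VG g 2)"
    and h: "is_gamma_tR_function VH EH h"
    and hmax: "\<forall>h'. is_gamma_tR_function VH EH h' \<longrightarrow> card (level VH h' 2) \<le> card (level VH h 2)"
  shows "max (rho VH EH * gamma_tR VG EG) (rho VG EG * gamma_tR VH EH)
           \<le> gamma_tR (VG \<times> VH) (direct_prod_edge EG EH)
       \<and> int (gamma_tR (VG \<times> VH) (direct_prod_edge EG EH))
           \<le> int (gamma_tR VH EH) * int (gamma_tR VG EG)
              - 2 * int (card (level VG g 2)) * int (card (level VH h 2))"
proof
  obtain f where f: "is_trdf (VG \<times> VH) (direct_prod_edge EG EH) f"
    "weight (VG \<times> VH) f = gamma_tR (VG \<times> VH) (direct_prod_edge EG EH)"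
    using gamma_ex[OF prod_simple[OF G(1) H(1)] prod_noiso[OF G(2) H(2)]] by blast
  obtain DH where DH: "is_packing VH EH DH" "card DH = rho VH EH" using rho_ex[OF H(1)] by blast
  obtain DG where DG: "is_packing VG EG DG" "card DG = rho VG EG" using rho_ex[OF G(1)] by blast
  have 1: "rho VH EH * gamma_tR VG EG \<le> gamma_tR (VG \<times> VH) (direct_prod_edge EG EH)"
    using lower[OF G(1) H(1) f(1) DH(1)] DH(2) f(2) by simp
  have 2: "rho VG EG * gamma_tR VH EH \<le> gamma_tR (VG \<times> VH) (direct_prod_edge EG EH)"
    using lower[OF H(1) G(1) swap_trdf(1)[OF f(1)] DG(1)] DG(2) f(2) swap_trdf(2)[OF f(1)] by simp
  show "max (rho VH EH * gamma_tR VG EG) (rho VG EG * gamma_tR VH EH)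
           \<le> gamma_tR (VG \<times> VH) (direct_prod_edge EG EH)" using 1 2 by simp
next
  have finG: "finite VG" using G(1) by (simp add: simple_graph_def)
  have finH: "finite VH" using H(1) by (simp add: simple_graph_def)
  have gt: "is_trdf VG EG g" and hw: "weight VG g = gamma_tR VG EG"
    using g by (auto simp: is_gamma_tR_function_def)
  have ht: "is_trdf VH EH h" and hw': "weight VH h = gamma_tR VH EH"
    using h by (auto simp: is_gamma_tR_function_def)
  define F where "F = (\<lambda>x. min 2 (g (fst x) * h (snd x)))"
  have gn: "\<exists>u'. EG u u' \<and> g u' \<noteq> 0 \<and> (g u = 0 \<longrightarrow> g u' = 2)" if "u \<in> VG" for u
    using gt that unfolding is_trdf_def by (cases "g u = 0") force+
  have hn: "\<exists>u'. EH u u' \<and> h u' \<noteq> 0 \<and> (h u = 0 \<longrightarrow> h u' = 2)" if "u \<in> VH" for u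
    using ht that unfolding is_trdf_def by (cases "h u = 0") force+
  have Ft: "is_trdf (VG \<times> VH) (direct_prod_edge EG EH) F"
    unfolding is_trdf_def
  proof (intro conjI ballI impI)
    fix x assume "x \<in> VG \<times> VH" then show "F x \<le> 2" by (simp add: F_def)
  next
    fix x assume x: "x \<in> VG \<times> VH" and z: "F x = 0"
    obtain u v where uv: "x = (u, v)" "u \<in> VG" "v \<in> VH" using x by auto
    obtain u' where u': "EG u u'" "g u' \<noteq> 0" "g u = 0 \<longrightarrow> g u' = 2" using gn[OF uv(2)] by metis
    obtain v' where v': "EH v v'" "h v' \<noteq> 0" "h v = 0 \<longrightarrow> h v' = 2" using hn[OF uv(3)] by metis
    have "g u = 0 \<or> h v = 0" using z uv by (auto simp: F_def min_def split: if_splits)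
    then have "g u' * h v' \<ge> 2" using u' v' by (auto simp: mult_le_mono)
    then have "F (u', v') = 2" by (simp add: F_def)
    then show "\<exists>y. direct_prod_edge EG EH x y \<and> F y = 2"
      using u' v' uv by (auto simp: direct_prod_edge_def)
  next
    fix x assume x: "x \<in> VG \<times> VH" and z: "F x \<noteq> 0"
    obtain u v where uv: "x = (u, v)" "u \<in> VG" "v \<in> VH" using x by auto
    obtain u' where u': "EG u u'" "g u' \<noteq> 0" using gn[OF uv(2)] by metis
    obtain v' where v': "EH v v'" "h v' \<noteq> 0" using hn[OF uv(3)] by metis
    have "F (u', v') \<noteq> 0" using u' v' by (simp add: F_def)
    then show "\<exists>y. direct_prod_edge EG EH x y \<and> F y \<noteq> 0"
      using u' v' uv by (auto simp: direct_prod_edge_def)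
  qed
  define P where "P = (\<lambda>x. g (fst x) = 2 \<and> h (snd x) = 2)"
  have pt: "F x + (if P x then 2 else 0) = g (fst x) * h (snd x)" if "x \<in> VG \<times> VH" for x
  proof -
    have "g (fst x) \<le> 2" "h (snd x) \<le> 2" using that gt ht by (auto simp: is_trdf_def)
    then show ?thesis unfolding F_def P_def
      by (cases "g (fst x)"; cases "h (snd x)") (auto simp: numeral_2_eq_2 le_Suc_eq)
  qed
  have "weight (VG \<times> VH) F + (\<Sum>x\<in>VG \<times> VH. if P x then 2 else 0)
        = (\<Sum>x\<in>VG \<times> VH. g (fst x) * h (snd x))"
    unfolding weight_def sum.distrib[symmetric] using pt by (intro sum.cong) auto
  also have "\<dots> = weight VG g * weight VH h"
    unfolding weight_def sum_product sum.cartesian_product by (simp add: case_prod_beta)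
  finally have eq: "weight (VG \<times> VH) F + (\<Sum>x\<in>VG \<times> VH. if P x then 2 else 0)
        = gamma_tR VG EG * gamma_tR VH EH" using hw hw' by simp
  have "(\<Sum>x\<in>VG \<times> VH. if P x then 2 else 0) = (\<Sum>x\<in>{x\<in>VG \<times> VH. P x}. (2::nat))"
    by (simp add: sum.inter_filter[symmetric] finG finH)
  also have "{x\<in>VG \<times> VH. P x} = level VG g 2 \<times> level VH h 2"
    by (auto simp: P_def level_def)
  finally have cnt: "(\<Sum>x\<in>VG \<times> VH. if P x then 2 else 0) = 2 * card (level VG g 2) * card (level VH h 2)"
    by (simp add: card_cartesian_product)
  have "gamma_tR (VG \<times> VH) (direct_prod_edge EG EH) \<le> weight (VG \<times> VH) F"
    by (rule gamma_le[OF prod_simple[OF G(1) H(1)] Ft])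
  then show "int (gamma_tR (VG \<times> VH) (direct_prod_edge EG EH))
           \<le> int (gamma_tR VH EH) * int (gamma_tR VG EG)
              - 2 * int (card (level VG g 2)) * int (card (level VH h 2))"
  proof -
    have e1: "weight (VG \<times> VH) F + 2 * card (level VG g 2) * card (level VH h 2) = gamma_tR VG EG * gamma_tR VH EH"
      using eq cnt by simp
    have e2: "int (weight (VG \<times> VH) F) + 2 * int (card (level VG g 2)) * int (card (level VH h 2))
       = int (gamma_tR VH EH) * int (gamma_tR VG EG)"
      using arg_cong[OF e1, of int] by (simp add: mult.commute)
    have "int (gamma_tR (VG \<times> VH) (direct_prod_edge EG EH)) \<le> int (weight (VG \<times> VH) F)"
      using \<open>gamma_tR (VG \<times> VH) (direct_prod_edge EG EH) \<le> weight (VG \<times> VH) F\<close> by simp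
    then show ?thesis using e2 by linarith
  qed
qed

end
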